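(* Let $G$ be a real $n\times m$ matrix and $\mathbf v\in\mathbb R^n$, and let $\mathcal G=\{x\in\mathbb R^m: Gx\le \mathbf v\}$ (componentwise). Let $P$ be the nonnegative orthant of $\mathbb R^n$ and $F=\mathcal R(G)$. Write $\mathbf v=\mathbf v_F+\upsilon$, where $\mathbf v_F$ is the orthogonal projection of $\mathbf v$ onto $F$ and $\upsilon$ is the orthogonal projection of $\mathbf v$ onto $F^\perp$. Assume $\upsilon\neq 0$ and $F\cap P=\{0\}$. Let $F_e=\mathrm{span}(\upsilon)+F$. Every $y\in F_e$ can be written uniquely as $y=\beta(y)\upsilon+z$ with $\beta(y)\in\mathbb R$ and $z\in F$. Then the following hold. 1. If $F_e\cap P\neq\{0\}$, then the sign of $\beta(y)$ is the same for all nonzero $y\in F_e\cap P$, and this sign is nonzero. 2. $\mathcal G\neq\emptyset$ if and only if $F_e\cap P\neq\{0\}$ and $\beta(y)>0$ for the nonzero $y\in F_e\cap P$.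
   Context: Uniqueness of the decomposition holds because $\upsilon\perp F$ and $\upsilon\ne0$. *)

theory Defs
  imports "HOL-Analysis.Analysis"
begin

definition orthant :: "(real ^ 'n) set" where
  "orthant = {y. \<forall>i. 0 \<le> y $ i}"

definition feasible :: "real ^ 'm ^ 'n \<Rightarrow> real ^ 'n \<Rightarrow> (real ^ 'm) set" where
  "feasible G v = {x. \<forall>i. (G *v x) $ i \<le> v $ i}"

definition ext_space :: "real ^ 'n \<Rightarrow> (real ^ 'n) set \<Rightarrow> (real ^ 'n) set" where
  "ext_space u F = {b *\<^sub>R u + z | b z. z \<in> F}"

definition beta_coeff :: "real ^ 'n \<Rightarrow> (real ^ 'n) set \<Rightarrow> real ^ 'n \<Rightarrow> real" where
  "beta_coeff u F y = (THE b. \<exists>z\<in>F. y = b *\<^sub>R u + z)"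

end

theory Submission
  imports Defs
begin

lemma beta_eq:
  fixes u :: "real ^ 'n"
  assumes S: "subspace F" and perp: "\<forall>z\<in>F. u \<bullet> z = 0" and nz: "u \<noteq> 0" and z: "z \<in> F"
  shows "beta_coeff u F (b *\<^sub>R u + z) = b"
  unfolding beta_coeff_def
proof (rule the_equality)
  show "\<exists>z'\<in>F. b *\<^sub>R u + z = b *\<^sub>R u + z'" using z by blast
next
  fix b' assume "\<exists>z'\<in>F. b *\<^sub>R u + z = b' *\<^sub>R u + z'"
  then obtain z' where z': "z' \<in> F" "b *\<^sub>R u + z = b' *\<^sub>R u + z'" by blast
  have "(b - b') *\<^sub>R u = z' - z" using z'(2) by (simp add: algebra_simps)
  moreover have "z' - z \<in> F" using S z z'(1) by (simp add: subspace_diff)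
  ultimately have "u \<bullet> ((b - b') *\<^sub>R u) = 0" using perp by simp
  hence "(b - b') * (u \<bullet> u) = 0" by simp
  moreover have "u \<bullet> u \<noteq> 0" using nz by simp
  ultimately show "b' = b" by simp
qed

lemma orth_nz_pos:
  fixes y :: "real ^ 'n"
  assumes "y \<in> orthant" "y \<noteq> 0"
  shows "\<exists>i. y $ i > 0"
proof -
  obtain i where "y $ i \<noteq> 0" using assms(2) by (metis vec_eq_iff zero_index)
  thus ?thesis using assms(1) unfolding orthant_def by (auto simp: less_le)
qed

theorem mainTheorem3:
  fixes G :: "real ^ 'm ^ 'n" and v vF ups :: "real ^ 'n"
  defines "F \<equiv> range (\<lambda>x. G *v x)"
  defines "Fe \<equiv> ext_space ups F"
  assumes vF_in: "vF \<in> F"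
    and ups_perp: "\<forall>z\<in>F. ups \<bullet> z = 0"
    and decomp: "v = vF + ups"
    and ups_nz: "ups \<noteq> 0"
    and FP: "F \<inter> orthant = {0}"
  shows "(Fe \<inter> orthant \<noteq> {0} \<longrightarrow>
            (\<forall>y \<in> Fe \<inter> orthant - {0}. beta_coeff ups F y > 0) \<or>
            (\<forall>y \<in> Fe \<inter> orthant - {0}. beta_coeff ups F y < 0))
      \<and> (feasible G v \<noteq> {} \<longleftrightarrow>
            Fe \<inter> orthant \<noteq> {0} \<and> (\<forall>y \<in> Fe \<inter> orthant - {0}. beta_coeff ups F y > 0))"
proof -
  have S: "subspace F" unfolding F_def
    using linear_subspace_image[OF matrix_vector_mul_linear subspace_UNIV, of G] by simp
  have beta: "beta_coeff ups F (b *\<^sub>R ups + z) = b" if "z \<in> F" for b z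
    using beta_eq[OF S ups_perp ups_nz that] .
  have nz0: "beta_coeff ups F y \<noteq> 0" if y: "y \<in> Fe \<inter> orthant - {0}" for y
  proof
    assume b0: "beta_coeff ups F y = 0"
    from y obtain b z where bz: "z \<in> F" "y = b *\<^sub>R ups + z" unfolding Fe_def ext_space_def by blast
    with b0 beta have "b = 0" by simp
    with bz have "y \<in> F" by simp
    with y FP show False by blast
  qed
  have part1: "(\<forall>y \<in> Fe \<inter> orthant - {0}. beta_coeff ups F y > 0) \<or>
            (\<forall>y \<in> Fe \<inter> orthant - {0}. beta_coeff ups F y < 0)"
  proof (rule ccontr)
    assume "\<not> ?thesis"
    then obtain y1 y2 where y1: "y1 \<in> Fe \<inter> orthant - {0}" "\<not> beta_coeff ups F y1 > 0"
      and y2: "y2 \<in> Fe \<inter> orthant - {0}" "\<not> beta_coeff ups F y2 < 0" by blast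
    from y1 obtain b1 z1 where bz1: "z1 \<in> F" "y1 = b1 *\<^sub>R ups + z1" unfolding Fe_def ext_space_def by blast
    from y2 obtain b2 z2 where bz2: "z2 \<in> F" "y2 = b2 *\<^sub>R ups + z2" unfolding Fe_def ext_space_def by blast
    have b1: "b1 < 0" using y1(2) nz0[OF y1(1)] beta[OF bz1(1), of b1] unfolding bz1(2) by linarith
    have b2: "b2 > 0" using y2(2) nz0[OF y2(1)] beta[OF bz2(1), of b2] unfolding bz2(2) by linarith
    define y where "y = b2 *\<^sub>R y1 + (- b1) *\<^sub>R y2"
    have "y = b2 *\<^sub>R z1 + (- b1) *\<^sub>R z2" unfolding y_def bz1(2) bz2(2) by (simp add: algebra_simps)
    hence yF: "y \<in> F" using S bz1(1) bz2(1) by (simp add: subspace_diff subspace_scale)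
    have yP: "y \<in> orthant" unfolding orthant_def
    proof (safe)
      fix i
      have "0 \<le> y1 $ i" "0 \<le> y2 $ i" using y1 y2 unfolding orthant_def by auto
      hence "0 \<le> b2 * y1 $ i" "0 \<le> (- b1) * y2 $ i" using b1 b2 by (simp, simp add: mult_nonpos_nonneg)
      thus "0 \<le> y $ i" unfolding y_def by simp
    qed
    obtain i where i: "y1 $ i > 0" using orth_nz_pos y1 by blast
    have "0 \<le> y2 $ i" using y2 unfolding orthant_def by auto
    hence "0 \<le> (- b1) * y2 $ i" using b1 by (simp add: mult_nonpos_nonneg)
    moreover have "0 < b2 * y1 $ i" using i b2 by simp
    ultimately have "y $ i > 0" unfolding y_def by simp
    hence "y \<noteq> 0" by auto
    with yF yP FP show False by blast
  qed
  have part2: "feasible G v \<noteq> {} \<longleftrightarrow>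
            Fe \<inter> orthant \<noteq> {0} \<and> (\<forall>y \<in> Fe \<inter> orthant - {0}. beta_coeff ups F y > 0)"
  proof
    assume "feasible G v \<noteq> {}"
    then obtain x where x: "\<forall>i. (G *v x) $ i \<le> v $ i" unfolding feasible_def by blast
    define y where "y = v - G *v x"
    have zF: "vF - G *v x \<in> F" using S vF_in unfolding F_def by (simp add: subspace_diff)
    have ye: "y = 1 *\<^sub>R ups + (vF - G *v x)" unfolding y_def decomp by simp
    have yFe: "y \<in> Fe" unfolding Fe_def ext_space_def ye using zF by blast
    have yP: "y \<in> orthant" using x unfolding y_def orthant_def by simp
    have yb: "beta_coeff ups F y = 1" unfolding ye using beta[OF zF] .
    have "y \<noteq> 0"
    proof
      assume "y = 0"
      have "ups = - (vF - G *v x)" using \<open>y = 0\<close> ye by (simp add: algebra_simps)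
      hence "ups \<in> F" using S zF by (metis subspace_neg)
      hence "ups \<bullet> ups = 0" using ups_perp by blast
      thus False using ups_nz by simp
    qed
    hence ym: "y \<in> Fe \<inter> orthant - {0}" using yFe yP by blast
    hence "Fe \<inter> orthant \<noteq> {0}" by blast
    moreover have "\<forall>y \<in> Fe \<inter> orthant - {0}. beta_coeff ups F y > 0"
      using part1 ym yb by force
    ultimately show "Fe \<inter> orthant \<noteq> {0} \<and> (\<forall>y \<in> Fe \<inter> orthant - {0}. beta_coeff ups F y > 0)" by blast
  next
    assume A: "Fe \<inter> orthant \<noteq> {0} \<and> (\<forall>y \<in> Fe \<inter> orthant - {0}. beta_coeff ups F y > 0)"
    have "0 \<in> Fe" unfolding Fe_def ext_space_def using S
      by (auto intro!: exI[of _ 0] simp: subspace_0)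
    moreover have "0 \<in> orthant" unfolding orthant_def by simp
    ultimately obtain y where y: "y \<in> Fe \<inter> orthant - {0}" using A by blast
    with A have bp: "beta_coeff ups F y > 0" by blast
    from y obtain b z where bz: "z \<in> F" "y = b *\<^sub>R ups + z" unfolding Fe_def ext_space_def by blast
    have b: "b > 0" using bp beta[OF bz(1)] bz(2) by simp
    have "vF - (1/b) *\<^sub>R z \<in> F" using S vF_in bz(1) by (simp add: subspace_diff subspace_scale)
    then obtain x where x: "G *v x = vF - (1/b) *\<^sub>R z" unfolding F_def by auto
    have "v - G *v x = (1/b) *\<^sub>R y" unfolding x decomp bz(2) using b by (simp add: algebra_simps)
    hence eq: "\<And>i. v $ i - (G *v x) $ i = (1/b) * y $ i" by (simp add: vec_eq_iff)
    have "\<forall>i. (G *v x) $ i \<le> v $ i"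
    proof
      fix i
      have "0 \<le> y $ i" using y unfolding orthant_def by auto
      hence "0 \<le> (1/b) * y $ i" using b by simp
      thus "(G *v x) $ i \<le> v $ i" using eq[of i] by linarith
    qed
    thus "feasible G v \<noteq> {}" unfolding feasible_def by blast
  qed
  show ?thesis using part1 part2 by blast
qed

end
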